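(* Let $m,p\in(0,\infty)$, let $(u,v)$ be an admissible pair of weights with respect to $(m,p)$, let $\varphi$ be the fundamental function of $CL^{m,p}(u,v)$ and let $\{t_k\}_{k\in\mathbb{K}}$ be a discretizing sequence of $CL^{m,p}(u,v)$. Then for every $k\in\mathbb{K}$ and every $t\in\Delta_{k-1}$, \[ \int_0^{t_k} v(s)\,ds\le \frac{2^{\frac pm+1}}{2^{\frac pm+1}-1}\int_{\Delta_{k-1}} v(s)\,ds \] and \[ \varphi^p(t)\le \frac{2^{\frac{3p}{m}+3}}{2^{\frac pm+1}-1}\int_{\Delta_{k-3}}v(s)\,ds\; U^{\frac pm}(\Delta_{k-2}) + 2^{\frac pm+2}\int_{\Delta_{k-2}} v(s)\,U^{\frac pm}(s,t_{k-1})\,ds + \frac{3\cdot 2^{\frac{2p}{m}+1}}{2^{\frac pm+1}-1}\int_{\Delta_{k-2}}v(s)\,ds\; U^{\frac pm}(t_{k-1},t). \]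
   Context: A weight is a nonnegative measurable function on $(0,\infty)$. For a weight $u$ and $0\le s\le t\le\infty$, $U(s,t):=\int_s^t u(x)\,dx$. For $m,p\in(0,\infty)$ and weights $u,v$, the fundamental function of $CL^{m,p}(u,v)$ is $\varphi(t):=\left(\int_0^t v(s)U(s,t)^{p/m}ds\right)^{1/p}$, $t\in(0,\infty]$; $(u,v)$ is admissible with respect to $(m,p)$ if $0<\varphi(t)<\infty$ for all $t\in(0,\infty)$. A discretizing sequence of $CL^{m,p}(u,v)$ is a sequence $\{t_k\}_{k\in\mathbb{K}}$ together with $K\in\{0,\infty\}$, $\mathbb{K}=\{k\in\mathbb{Z}: k\le 0\}$ if $K=0$ and $\mathbb{K}=\mathbb{Z}$ if $K=\infty$, and disjoint sets $\mathbb{K}_1,\mathbb{K}_2$ with union $\mathbb{K}$, such that: $0<t_{k-1}\le t_k<\infty$ for $k\in\mathbb{K}\setminus\{K\}$; $t_0=\infty$ if $K=0$; $\int_0^{t_k}v\ge 2^{p/m+1}\int_0^{t_{k-1}}v$ and $\varphi^p(t_k)\ge 2^{p/m+1}\varphi^p(t_{k-1})$ for all $k\in\mathbb{K}$; equality holds in the first of these for $k\in\mathbb{K}_1$ and in the second for $k\in\mathbb{K}_2$ (such sequences exist). For indices $k$ with $k+1\in\mathbb{K}$, $\Delta_k:=[t_k,t_{k+1}]$ and $U(\Delta_k):=U(t_k,t_{k+1})$. *)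

theory Defs
  imports "HOL-Analysis.Analysis"
begin

text \<open>Points of (0,\<infinity>] are represented as extended reals; all integrals of
  nonnegative functions are Lebesgue integrals with values in [0,\<infinity>] (ennreal).\<close>

definition weight :: "(real \<Rightarrow> real) \<Rightarrow> bool" where
  "weight w \<longleftrightarrow> set_borel_measurable borel {0<..} w \<and> (\<forall>x>0. 0 \<le> w x)"

definition epowr :: "ennreal \<Rightarrow> real \<Rightarrow> ennreal" where
  "epowr x a = (if x = top then top else ennreal (enn2real x powr a))"

definition wint :: "(real \<Rightarrow> real) \<Rightarrow> ereal \<Rightarrow> ereal \<Rightarrow> ennreal" where
  "wint w s t = (\<integral>\<^sup>+ x \<in> {x. 0 < x \<and> s \<le> ereal x \<and> ereal x \<le> t}. ennreal (w x) \<partial>lborel)"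

definition fund_p :: "real \<Rightarrow> real \<Rightarrow> (real \<Rightarrow> real) \<Rightarrow> (real \<Rightarrow> real) \<Rightarrow> ereal \<Rightarrow> ennreal" where
  "fund_p m p u v t = (\<integral>\<^sup>+ s \<in> {s. 0 < s \<and> ereal s \<le> t}.
       ennreal (v s) * epowr (wint u (ereal s) t) (p / m) \<partial>lborel)"

definition fund :: "real \<Rightarrow> real \<Rightarrow> (real \<Rightarrow> real) \<Rightarrow> (real \<Rightarrow> real) \<Rightarrow> ereal \<Rightarrow> ennreal" where
  "fund m p u v t = epowr (fund_p m p u v t) (1 / p)"

definition admissible :: "real \<Rightarrow> real \<Rightarrow> (real \<Rightarrow> real) \<Rightarrow> (real \<Rightarrow> real) \<Rightarrow> bool" where
  "admissible m p u v \<longleftrightarrow> (\<forall>t::real. 0 < t \<longrightarrow> 0 < fund m p u v (ereal t) \<and> fund m p u v (ereal t) < top)"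

text \<open>Discretizing sequence. \<open>finK\<close> = True means K = 0 (so \<open>\<KK> = {k \<le> 0}\<close>, t_0 = \<infinity>),
  \<open>finK\<close> = False means K = \<infinity> (so \<open>\<KK> = \<int>\<close>).\<close>
definition Kset :: "bool \<Rightarrow> int set" where
  "Kset finK = (if finK then {k. k \<le> 0} else UNIV)"

definition discretizing ::
  "real \<Rightarrow> real \<Rightarrow> (real \<Rightarrow> real) \<Rightarrow> (real \<Rightarrow> real) \<Rightarrow> (int \<Rightarrow> ereal) \<Rightarrow> bool \<Rightarrow> int set \<Rightarrow> int set \<Rightarrow> bool" where
  "discretizing m p u v t finK K1 K2 \<longleftrightarrow>
     K1 \<inter> K2 = {} \<and> K1 \<union> K2 = Kset finK \<and>
     (\<forall>k \<in> Kset finK - (if finK then {0} else {}). 0 < t (k - 1) \<and> t (k - 1) \<le> t k \<and> t k < \<infinity>) \<and>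
     (finK \<longrightarrow> t 0 = \<infinity>) \<and>
     (\<forall>k \<in> Kset finK.
        wint v 0 (t k) \<ge> ennreal (2 powr (p / m + 1)) * wint v 0 (t (k - 1)) \<and>
        epowr (fund m p u v (t k)) p \<ge> ennreal (2 powr (p / m + 1)) * epowr (fund m p u v (t (k - 1))) p) \<and>
     (\<forall>k \<in> K1. wint v 0 (t k) = ennreal (2 powr (p / m + 1)) * wint v 0 (t (k - 1))) \<and>
     (\<forall>k \<in> K2. epowr (fund m p u v (t k)) p = ennreal (2 powr (p / m + 1)) * epowr (fund m p u v (t (k - 1))) p)"

end

theory Submission imports Defs begin

definition SS :: "ereal \<Rightarrow> ereal \<Rightarrow> real set" where
  "SS a b = {x. 0 < x \<and> a \<le> ereal x \<and> ereal x \<le> b}"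

lemma SS_borel[measurable]: "SS a b \<in> sets borel"
  unfolding SS_def by measurable

lemma weight_meas:
  assumes "weight w"
  shows "(\<lambda>x. ennreal (indicator {0<..} x * w x)) \<in> borel_measurable borel"
proof -
  have "(\<lambda>x. indicator {0<..} x * w x) \<in> borel_measurable borel"
    using assms unfolding weight_def set_borel_measurable_def by simp
  then show ?thesis by measurable
qed

lemma ind_SS: "ennreal (w x) * indicator (SS a b) x = ennreal (indicator {0<..} x * w x) * indicator (SS a b) x"
  by (auto simp: indicator_def SS_def)

lemma wint_alt: "wint w s t = (\<integral>\<^sup>+ x. ennreal (indicator {0<..} x * w x) * indicator (SS s t) x \<partial>lborel)"
  unfolding wint_def SS_def[symmetric]
  by (intro nn_integral_cong) (simp add: ind_SS)

lemma wint_meas: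
  assumes "weight w"
  shows "(\<lambda>s. wint w (ereal s) t) \<in> borel_measurable borel"
proof -
  have m: "(\<lambda>x. ennreal (indicator {0<..} x * w x)) \<in> borel_measurable borel" by (rule weight_meas[OF assms])
  have "(\<lambda>(s,x). ennreal (indicator {0<..} x * w x) * indicator {x. 0 < x \<and> ereal s \<le> ereal x \<and> ereal x \<le> t} x) \<in> borel_measurable (borel \<Otimes>\<^sub>M lborel)"
    using m by measurable
  then have "(\<lambda>s. \<integral>\<^sup>+ x. ennreal (indicator {0<..} x * w x) * indicator {x. 0 < x \<and> ereal s \<le> ereal x \<and> ereal x \<le> t} x \<partial>lborel) \<in> borel_measurable borel"
    by (rule lborel.borel_measurable_nn_integral_fst[where f="\<lambda>(s,x). _ s x", simplified]) 
  then show ?thesis unfolding wint_alt SS_def by simp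
qed

lemma epowr_meas[measurable]:
  "(\<lambda>x. epowr x a) \<in> borel_measurable (borel :: ennreal measure)"
  unfolding epowr_def by measurable

lemma wint_mono: "a' \<le> a \<Longrightarrow> b \<le> b' \<Longrightarrow> wint w a b \<le> wint w a' b'"
  unfolding wint_def
  by (intro nn_integral_mono) (auto simp: indicator_def)

lemma wint_split:
  assumes "weight w" "a \<le> b" "b \<le> c"
  shows "wint w a c \<le> wint w a b + wint w b c"
proof -
  have m: "(\<lambda>x. ennreal (indicator {0<..} x * w x)) \<in> borel_measurable borel" by (rule weight_meas[OF assms(1)])
  have "wint w a c \<le> (\<integral>\<^sup>+ x. ennreal (indicator {0<..} x * w x) * indicator (SS a b) x + ennreal (indicator {0<..} x * w x) * indicator (SS b c) x \<partial>lborel)"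
    unfolding wint_alt
    by (intro nn_integral_mono) (auto simp: indicator_def SS_def)
  also have "\<dots> = wint w a b + wint w b c"
    unfolding wint_alt using m by (intro nn_integral_add) auto
  finally show ?thesis .
qed

lemma epowr_mono: "x \<le> y \<Longrightarrow> 0 < a \<Longrightarrow> epowr x a \<le> epowr y a"
  unfolding epowr_def
  by (auto simp: top_unique less_top intro!: ennreal_leI powr_mono2 enn2real_mono)

lemma epowr_zero[simp]: "0 < a \<Longrightarrow> epowr 0 a = 0"
  unfolding epowr_def by simp

lemma epowr_top[simp]: "epowr top a = top"
  unfolding epowr_def by simp

lemma epowr_pos: "0 < x \<Longrightarrow> epowr x a > 0"
  unfolding epowr_def by (auto simp: enn2real_eq_0_iff)

lemma epowr_fin: "x < top \<Longrightarrow> epowr x a < top"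
  unfolding epowr_def by auto

lemma epowr_add:
  assumes "0 < a"
  shows "epowr (x + y) a \<le> ennreal (2 powr a) * (epowr x a + epowr y a)"
proof (cases "x = top \<or> y = top")
  case True
  then show ?thesis by (auto simp: ennreal_mult_top)
next
  case False
  then obtain x' y' where xy: "x = ennreal x'" "y = ennreal y'" "0 \<le> x'" "0 \<le> y'"
    by (metis ennreal_cases top.not_eq_extremum less_top)
  have "(x' + y') powr a \<le> (2 * max x' y') powr a"
    using xy assms by (intro powr_mono2) auto
  also have "\<dots> = 2 powr a * max x' y' powr a"
    using xy by (simp add: powr_mult)
  also have "\<dots> \<le> 2 powr a * (x' powr a + y' powr a)"
    by (intro mult_left_mono) (auto simp: max_def)
  finally have "(x' + y') powr a \<le> 2 powr a * (x' powr a + y' powr a)" .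
  then show ?thesis
    using xy unfolding epowr_def
    by (simp add: ennreal_plus[symmetric] ennreal_mult[symmetric] del: ennreal_plus)
qed

lemma epowr_inv: "0 < p \<Longrightarrow> epowr (epowr x (1/p)) p = x"
  unfolding epowr_def
  by (cases x) (auto simp: powr_powr)

lemma ind_SS2: "ennreal (w x) * X * indicator (SS a b) x = ennreal (indicator {0<..} x * w x) * X * indicator (SS a b) x"
  by (auto simp: indicator_def SS_def)

lemma fund_p_alt: "fund_p m p u v t = (\<integral>\<^sup>+ s. ennreal (indicator {0<..} s * v s) * epowr (wint u (ereal s) t) (p/m) * indicator (SS 0 t) s \<partial>lborel)"
proof -
  have "SS 0 t = {s. 0 < s \<and> ereal s \<le> t}" by (auto simp: SS_def)
  then show ?thesis unfolding fund_p_def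
    by (intro nn_integral_cong) (metis ind_SS2)
qed

lemma E_meas:
  assumes "weight u"
  shows "(\<lambda>s. epowr (wint u (ereal s) t) a) \<in> borel_measurable borel"
  using measurable_compose[OF wint_meas[OF assms] epowr_meas] .

lemma fund_mono:
  assumes "0 < p/m" "a \<le> b"
  shows "fund_p m p u v a \<le> fund_p m p u v b"
  unfolding fund_p_alt
proof (intro nn_integral_mono)
  fix s
  show "ennreal (indicator {0<..} s * v s) * epowr (wint u (ereal s) a) (p/m) * indicator (SS 0 a) s
    \<le> ennreal (indicator {0<..} s * v s) * epowr (wint u (ereal s) b) (p/m) * indicator (SS 0 b) s"
    using assms by (auto simp: indicator_def SS_def intro!: mult_left_mono epowr_mono wint_mono)
qed

lemma fund_split:
  assumes u: "weight u" and v: "weight v" and r: "0 < p/m" and ab: "0 \<le> a" "a \<le> b"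
  shows "fund_p m p u v b \<le> ennreal (2 powr (p/m)) * fund_p m p u v a
     + ennreal (2 powr (p/m)) * epowr (wint u a b) (p/m) * wint v 0 a
     + (\<integral>\<^sup>+ s. ennreal (v s) * epowr (wint u (ereal s) b) (p/m) * indicator (SS a b) s \<partial>lborel)"
proof -
  define g where "g s = ennreal (indicator {0<..} s * v s)" for s
  define E where "E s t = epowr (wint u (ereal s) t) (p/m)" for s t
  define h where "h = ennreal (2 powr (p/m))"
  have gm: "g \<in> borel_measurable borel" unfolding g_def by (rule weight_meas[OF v])
  have Em: "(\<lambda>s. E s t) \<in> borel_measurable borel" for t unfolding E_def by (rule E_meas[OF u])
  have pw: "g s * E s b * indicator (SS 0 b) s \<le> h * (g s * E s a * indicator (SS 0 a) s)
       + (h * epowr (wint u a b) (p/m)) * (g s * indicator (SS 0 a) s) + g s * E s b * indicator (SS a b) s" for s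
  proof (cases "s \<in> SS 0 a")
    case True
    then have sa: "ereal s \<le> a" "0 < s" by (auto simp: SS_def)
    have "E s b \<le> epowr (wint u (ereal s) a + wint u a b) (p/m)"
      unfolding E_def using sa ab by (intro epowr_mono r wint_split u) auto
    also have "\<dots> \<le> h * (E s a + epowr (wint u a b) (p/m))"
      unfolding E_def h_def by (rule epowr_add[OF r])
    finally have "g s * E s b \<le> g s * (h * (E s a + epowr (wint u a b) (p/m)))"
      by (rule mult_left_mono) simp
    then show ?thesis using True sa ab
      by (simp add: algebra_simps indicator_def SS_def)
  next
    case False
    then show ?thesis
      by (cases "s \<in> SS 0 b") (auto simp: indicator_def SS_def not_le)
  qed
  have "fund_p m p u v b = (\<integral>\<^sup>+ s. g s * E s b * indicator (SS 0 b) s \<partial>lborel)"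
    unfolding fund_p_alt g_def E_def ..
  also have "\<dots> \<le> (\<integral>\<^sup>+ s. h * (g s * E s a * indicator (SS 0 a) s)
       + (h * epowr (wint u a b) (p/m)) * (g s * indicator (SS 0 a) s) + g s * E s b * indicator (SS a b) s \<partial>lborel)"
    by (intro nn_integral_mono pw)
  also have "\<dots> = h * (\<integral>\<^sup>+ s. g s * E s a * indicator (SS 0 a) s \<partial>lborel)
       + (h * epowr (wint u a b) (p/m)) * (\<integral>\<^sup>+ s. g s * indicator (SS 0 a) s \<partial>lborel)
       + (\<integral>\<^sup>+ s. g s * E s b * indicator (SS a b) s \<partial>lborel)"
    using gm Em by (simp add: nn_integral_add nn_integral_cmult)
  also have "\<dots> = h * fund_p m p u v a + h * epowr (wint u a b) (p/m) * wint v 0 a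
     + (\<integral>\<^sup>+ s. ennreal (v s) * epowr (wint u (ereal s) b) (p/m) * indicator (SS a b) s \<partial>lborel)"
    unfolding fund_p_alt wint_alt g_def E_def by (simp add: ind_SS2)
  finally show ?thesis unfolding h_def .
qed

lemma I_bound:
  assumes u: "weight u" and v: "weight v" and r: "0 < p/m" 
  shows "(\<integral>\<^sup>+ s. ennreal (v s) * epowr (wint u (ereal s) b) (p/m) * indicator (SS a b) s \<partial>lborel)
     \<le> epowr (wint u a b) (p/m) * wint v a b"
proof -
  have gm: "(\<lambda>s. ennreal (indicator {0<..} s * v s)) \<in> borel_measurable borel" by (rule weight_meas[OF v])
  have "(\<integral>\<^sup>+ s. ennreal (v s) * epowr (wint u (ereal s) b) (p/m) * indicator (SS a b) s \<partial>lborel)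
     \<le> (\<integral>\<^sup>+ s. epowr (wint u a b) (p/m) * (ennreal (indicator {0<..} s * v s) * indicator (SS a b) s) \<partial>lborel)"
    by (intro nn_integral_mono)
       (auto simp: indicator_def SS_def mult.commute intro!: mult_left_mono epowr_mono r wint_mono)
  also have "\<dots> = epowr (wint u a b) (p/m) * wint v a b"
    unfolding wint_alt using gm by (simp add: nn_integral_cmult)
  finally show ?thesis .
qed

lemma fund_fin_pos:
  assumes "admissible m p u v" "0 < p" "0 < x"
  shows "0 < fund_p m p u v (ereal x)" "fund_p m p u v (ereal x) < top"
proof -
  have a: "0 < fund m p u v (ereal x)" "fund m p u v (ereal x) < top"
    using assms unfolding admissible_def by auto
  show "0 < fund_p m p u v (ereal x)"
    using a(1) assms(2) unfolding fund_def by (metis epowr_zero gr_zeroI divide_pos_pos zero_less_one less_irrefl)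
  show "fund_p m p u v (ereal x) < top"
    using a(2) unfolding fund_def by (metis epowr_top less_irrefl top.not_eq_extremum)
qed

lemma U_to_finite:
  assumes u: "weight u" and pos: "0 < wint u a \<infinity>"
  shows "\<exists>n::nat. 0 < wint u a (ereal (real n))"
proof (rule ccontr)
  assume "\<not> ?thesis"
  then have z: "\<And>n::nat. wint u a (ereal (real n)) = 0" by auto
  define g where "g x = ennreal (indicator {0<..} x * u x)" for x
  have gm: "g \<in> borel_measurable borel" unfolding g_def by (rule weight_meas[OF u])
  have "AE x in lborel. g x * indicator (SS a (ereal (real n))) x = 0" for n::nat
    using z[of n] gm unfolding wint_alt g_def[symmetric]
    by (subst (asm) nn_integral_0_iff_AE) auto
  then have "AE x in lborel. \<forall>n::nat. g x * indicator (SS a (ereal (real n))) x = 0"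
    by (subst AE_all_countable) blast
  then have "AE x in lborel. g x * indicator (SS a \<infinity>) x = 0"
  proof (rule AE_mp, intro AE_I2 impI)
    fix x assume h: "\<forall>n::nat. g x * indicator (SS a (ereal (real n))) x = 0"
    show "g x * indicator (SS a \<infinity>) x = 0"
    proof (cases "x \<in> SS a \<infinity>")
      case True
      have "x \<le> real (nat \<lceil>x\<rceil>)" by linarith
      then have "x \<in> SS a (ereal (real (nat \<lceil>x\<rceil>)))" using True by (auto simp: SS_def)
      then show ?thesis using h[rule_format, of "nat \<lceil>x\<rceil>"] True by (simp add: indicator_def)
    qed simp
  qed
  then have "wint u a \<infinity> = 0"
    unfolding wint_alt g_def[symmetric] using gm by (subst nn_integral_0_iff_AE) auto
  with pos show False by simp
qed

lemma A_fin:
  assumes u: "weight u" and v: "weight v" and adm: "admissible m p u v" and m: "0 < m" and p: "0 < p"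
    and a: "0 < a" and ab: "ereal a \<le> b"
    and grow: "fund_p m p u v b \<ge> ennreal (2 powr (p/m+1)) * fund_p m p u v (ereal a)"
  shows "wint v 0 (ereal a) < top"
proof (rule ccontr)
  assume inf: "\<not> wint v 0 (ereal a) < top"
  have r: "0 < p/m" using m p by simp
  define h where "h = 2 powr (p/m)"
  have h: "0 < h" unfolding h_def by simp
  have c: "2 powr (p/m+1) = 2 * h" unfolding h_def by (simp add: powr_add)
  obtain q where q: "fund_p m p u v (ereal a) = ennreal q" "0 < q"
    using fund_fin_pos[OF adm p a]
    by (metis ennreal_cases ennreal_less_zero_iff less_irrefl)
  have Upos: "0 < wint u (ereal a) b"
  proof (rule ccontr)
    assume "\<not> 0 < wint u (ereal a) b"
    then have U0: "wint u (ereal a) b = 0" by simp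
    have "fund_p m p u v b \<le> ennreal h * fund_p m p u v (ereal a)
       + ennreal h * epowr (wint u (ereal a) b) (p/m) * wint v 0 (ereal a)
       + (\<integral>\<^sup>+ s. ennreal (v s) * epowr (wint u (ereal s) b) (p/m) * indicator (SS (ereal a) b) s \<partial>lborel)"
      unfolding h_def using a ab by (intro fund_split u v r) auto
    also have "(\<integral>\<^sup>+ s. ennreal (v s) * epowr (wint u (ereal s) b) (p/m) * indicator (SS (ereal a) b) s \<partial>lborel) \<le> 0"
      using I_bound[OF u v r, of b "ereal a"] U0 r by simp
    finally have "fund_p m p u v b \<le> ennreal (h * q)"
      using U0 r q h by (simp add: ennreal_mult)
    moreover have "ennreal (2 * h * q) \<le> fund_p m p u v b"
      using grow c q h by (simp add: ennreal_mult)
    ultimately have "2 * h * q \<le> h * q"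
      using h q by (metis ennreal_le_iff order_trans mult_nonneg_nonneg less_imp_le)
    then show False using h q by (simp add: mult_le_cancel_right)
  qed
  obtain b' where b': "ereal a \<le> ereal b'" "0 < wint u (ereal a) (ereal b')"
  proof (cases b)
    case (real r)
    then show ?thesis using that ab Upos by auto
  next
    case PInf
    then obtain n :: nat where n: "0 < wint u (ereal a) (ereal (real n))"
      using U_to_finite[OF u] Upos by blast
    show ?thesis
    proof (rule that[of "max a (real n)"])
      show "0 < wint u (ereal a) (ereal (max a (real n)))"
        using n wint_mono[of "ereal a" "ereal a" "ereal (real n)" "ereal (max a (real n))" u]
        by auto
    qed simp
  next
    case MInf
    then show ?thesis using ab by simp
  qed
  have b'pos: "0 < b'" using a b' by simp
  define g where "g s = ennreal (indicator {0<..} s * v s)" for s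
  have gm: "g \<in> borel_measurable borel" unfolding g_def by (rule weight_meas[OF v])
  have "(\<integral>\<^sup>+ s. epowr (wint u (ereal a) (ereal b')) (p/m) * (g s * indicator (SS 0 (ereal a)) s) \<partial>lborel)
      \<le> fund_p m p u v (ereal b')"
    unfolding fund_p_alt g_def
    using b' by (intro nn_integral_mono)
       (auto simp: indicator_def SS_def mult.commute intro!: mult_left_mono epowr_mono r wint_mono)
  moreover have "(\<integral>\<^sup>+ s. epowr (wint u (ereal a) (ereal b')) (p/m) * (g s * indicator (SS 0 (ereal a)) s) \<partial>lborel) = top"
  proof -
    have Vt: "(\<integral>\<^sup>+ s. g s * indicator (SS 0 (ereal a)) s \<partial>lborel) = top"
      using inf unfolding wint_alt g_def[symmetric] using top.not_eq_extremum by blast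
    have "epowr (wint u (ereal a) (ereal b')) (p/m) \<noteq> 0" using epowr_pos[OF b'(2), of "p/m"] by simp
    then show ?thesis using Vt gm by (simp add: nn_integral_cmult ennreal_mult_top)
  qed
  ultimately show False using fund_fin_pos(2)[OF adm p b'pos] by (simp add: top_unique)
qed

lemma claim1_arith:
  fixes T A B :: ennreal and c :: real
  assumes c: "1 < c" and TAB: "T \<le> A + B" and cA: "ennreal c * A \<le> T" and A: "A < top"
  shows "T \<le> ennreal (c/(c-1)) * B"
proof (cases "B = top")
  case True
  have "0 < c/(c-1)" using c by simp
  then have "ennreal (c/(c-1)) \<noteq> 0" by (simp only: ennreal_eq_0_iff not_le)
  then have "ennreal (c/(c-1)) * top = top" by (rule ennreal_top_mult_left)
  then show ?thesis using True by simp
next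
  case False
  obtain a where a: "A = ennreal a" "0 \<le> a" using A by (cases A) auto
  obtain b where b: "B = ennreal b" "0 \<le> b" using False by (cases B) auto
  note ab = a(1) b(1) a(2) b(2)
  have T1: "T \<le> ennreal (a + b)" using TAB ab by simp
  then have "T < top" by (rule order.strict_trans1) simp
  then have "T \<noteq> top" by simp
  then obtain t where t: "T = ennreal t" "0 \<le> t" by (cases T) auto
  have t1: "t \<le> a + b" using T1 t ab by (simp add: ennreal_le_iff del: ennreal_plus)
  have c0: "0 \<le> c" "0 \<le> c / (c - 1)" using c by auto
  have "ennreal (c * a) = ennreal c * ennreal a" using c0 ab by (intro ennreal_mult) auto
  then have "ennreal (c * a) \<le> ennreal t" using cA ab t by simp
  then have t2: "c * a \<le> t" using t by (simp add: ennreal_le_iff)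
  have "c * t \<le> c * (a + b)" using t1 c by (intro mult_left_mono) auto
  then have "t * (c - 1) \<le> c * b" using t2 by (simp add: algebra_simps)
  then have "t \<le> c / (c - 1) * b" using c by (simp add: field_simps)
  then have "ennreal t \<le> ennreal (c / (c - 1) * b)" by (rule ennreal_leI)
  moreover have "ennreal (c / (c - 1) * b) = ennreal (c / (c - 1)) * ennreal b" using c0 ab by (intro ennreal_mult) auto
  ultimately show ?thesis using t ab by simp
qed

lemma Kset_down: "j \<in> Kset finK \<Longrightarrow> i \<le> j \<Longrightarrow> i \<in> Kset finK"
  unfolding Kset_def by (auto split: if_splits)

lemma disc_facts:
  assumes D: "discretizing m p u v t finK K1 K2" and j: "j \<in> Kset finK" and p: "0 < p"
  shows "\<exists>x>0. t (j-1) = ereal x" "t (j-1) \<le> t j"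
    "wint v 0 (t j) \<ge> ennreal (2 powr (p/m+1)) * wint v 0 (t (j-1))"
    "fund_p m p u v (t j) \<ge> ennreal (2 powr (p/m+1)) * fund_p m p u v (t (j-1))"
proof -
  have D3: "\<forall>k \<in> Kset finK - (if finK then {0} else {}). 0 < t (k - 1) \<and> t (k - 1) \<le> t k \<and> t k < \<infinity>"
    and D4: "finK \<longrightarrow> t 0 = \<infinity>"
    and D5: "\<forall>k \<in> Kset finK.
        wint v 0 (t k) \<ge> ennreal (2 powr (p / m + 1)) * wint v 0 (t (k - 1)) \<and>
        epowr (fund m p u v (t k)) p \<ge> ennreal (2 powr (p / m + 1)) * epowr (fund m p u v (t (k - 1))) p"
    using D unfolding discretizing_def by blast+
  have fe: "epowr (fund m p u v x) p = fund_p m p u v x" for x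
    unfolding fund_def using epowr_inv[OF p] .
  show "wint v 0 (t j) \<ge> ennreal (2 powr (p/m+1)) * wint v 0 (t (j-1))"
    "fund_p m p u v (t j) \<ge> ennreal (2 powr (p/m+1)) * fund_p m p u v (t (j-1))"
    using D5 j fe by auto
  have "0 < t (j - 1) \<and> t (j - 1) \<le> t j \<and> t (j-1) < \<infinity>"
  proof (cases "finK \<and> j = 0")
    case True
    have "-1 \<in> Kset finK - (if finK then {0} else {})" using True by (simp add: Kset_def)
    then have "0 < t (-1 - 1) \<and> t (-1 - 1) \<le> t (-1) \<and> t (-1) < \<infinity>" using D3 by blast
    then show ?thesis using True D4 by auto
  next
    case False
    then have "j \<in> Kset finK - (if finK then {0} else {})" using j by auto
    then have "0 < t (j - 1) \<and> t (j - 1) \<le> t j \<and> t j < \<infinity>" using D3 by blast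
    then have h: "0 < t (j - 1)" "t (j - 1) \<le> t j" "t j < \<infinity>" by blast+
    then show ?thesis using order.strict_trans1[OF h(2) h(3)] by blast
  qed
  then have h: "0 < t (j - 1)" "t (j - 1) \<le> t j" "t (j-1) < \<infinity>" by blast+
  then show "t (j-1) \<le> t j" by blast
  show "\<exists>x>0. t (j-1) = ereal x" using h(1,3) by (cases "t (j-1)") auto
qed

lemma claim1:
  assumes u: "weight u" and v: "weight v" and adm: "admissible m p u v" and m: "0 < m" and p: "0 < p"
    and D: "discretizing m p u v t finK K1 K2" and j: "j \<in> Kset finK"
  shows "wint v 0 (t j) \<le> ennreal (2 powr (p / m + 1) / (2 powr (p / m + 1) - 1)) * wint v (t (j - 1)) (t j)"
proof -
  obtain x where x: "0 < x" "t (j-1) = ereal x" using disc_facts(1)[OF D j p] by blast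
  have le: "t (j-1) \<le> t j" using disc_facts(2)[OF D j p] .
  have r: "0 < p/m" using m p by simp
  have "2 powr 0 < 2 powr (p / m + 1)" using r by (intro powr_less_mono) auto
  then have c: "1 < 2 powr (p / m + 1)" by simp
  have Afin: "wint v 0 (t (j-1)) < top"
    using A_fin[OF u v adm m p x(1), of "t j"] x le disc_facts(4)[OF D j p] by simp
  show ?thesis
  proof (rule claim1_arith[OF c _ _ Afin])
    show "wint v 0 (t j) \<le> wint v 0 (t (j - 1)) + wint v (t (j - 1)) (t j)"
      using x le by (intro wint_split v) auto
    show "ennreal (2 powr (p / m + 1)) * wint v 0 (t (j - 1)) \<le> wint v 0 (t j)"
      using disc_facts(3)[OF D j p] .
  qed
qed


lemma t1: "x + 2 * x = 3 * (x::ennreal)"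
proof -
  have "x + 2 * x = (1 + 2) * x" by (simp only: distrib_right mult_1)
  also have "(1 + 2::ennreal) = 3" by simp
  finally show ?thesis .
qed
lemma t2: "2 * x + 4 * x = 6 * (x::ennreal)"
proof -
  have "2 * x + 4 * x = (2 + 4) * x" by (simp only: distrib_right)
  also have "(2 + 4::ennreal) = 6" by simp
  finally show ?thesis .
qed

lemma final_arith:
  fixes P1 F2 A1 A2 B2 B3 X1 X2 I PT H Q :: ennreal
  assumes e1: "P1 \<le> H * F2 + H * X2 * A2 + I"
    and e2: "2 * H * F2 \<le> P1" and fin: "P1 < top"
    and a2: "A2 \<le> 2 * H * Q * B3" and a1: "A1 \<le> 2 * H * Q * B2"
    and K: "PT \<le> 2 * H * P1 \<or> PT \<le> H * P1 + H * X1 * A1 + X1 * (2 * H * A1)"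
  shows "PT \<le> 8 * H^3 * Q * B3 * X2 + 4 * H * I + 6 * H^2 * Q * B2 * X1"
proof -
  have "P1 + P1 \<le> (H * F2 + H * X2 * A2 + I) + (H * F2 + H * X2 * A2 + I)"
    by (intro add_mono e1)
  also have "\<dots> = 2 * H * F2 + (2 * H * X2 * A2 + 2 * I)"
    by (simp add: algebra_simps mult_2 mult_2_right)
  also have "\<dots> \<le> P1 + (2 * H * X2 * A2 + 2 * I)"
    by (intro add_mono e2 order_refl)
  finally have "P1 \<le> 2 * H * X2 * A2 + 2 * I"
    using fin by (auto simp add: ennreal_add_left_cancel_le)
  also have "\<dots> \<le> 2 * H * X2 * (2 * H * Q * B3) + 2 * I"
    by (intro add_mono mult_left_mono a2 order_refl) simp
  also have "\<dots> = 4 * H^2 * Q * B3 * X2 + 2 * I"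
    by (simp add: algebra_simps power2_eq_square)
  finally have P1: "P1 \<le> 4 * H^2 * Q * B3 * X2 + 2 * I" .
  from K show ?thesis
  proof
    assume "PT \<le> 2 * H * P1"
    also have "\<dots> \<le> 2 * H * (4 * H^2 * Q * B3 * X2 + 2 * I)"
      by (intro mult_left_mono P1) simp
    also have "\<dots> = 8 * H^3 * Q * B3 * X2 + 4 * H * I"
      by (simp add: algebra_simps power2_eq_square power3_eq_cube)
    also have "\<dots> \<le> 8 * H^3 * Q * B3 * X2 + 4 * H * I + 6 * H^2 * Q * B2 * X1"
      by simp
    finally show ?thesis .
  next
    assume "PT \<le> H * P1 + H * X1 * A1 + X1 * (2 * H * A1)"
    also have "\<dots> = H * P1 + 3 * (H * X1 * A1)"
    proof -
      have xx: "X1 * (2 * H * A1) = 2 * (H * X1 * A1)" by (simp add: ac_simps)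
      show ?thesis unfolding xx add.assoc t1 by (rule refl)
    qed
    also have "\<dots> \<le> H * (4 * H^2 * Q * B3 * X2 + 2 * I) + 3 * (H * X1 * (2 * H * Q * B2))"
      by (intro add_mono mult_left_mono P1 a1) simp_all
    also have "\<dots> = 4 * H^3 * Q * B3 * X2 + 2 * H * I + 6 * H^2 * Q * B2 * X1"
      by (simp add: algebra_simps power2_eq_square power3_eq_cube)
    also have "\<dots> \<le> 8 * H^3 * Q * B3 * X2 + 4 * H * I + 6 * H^2 * Q * B2 * X1"
    proof -
      have "4 * H^3 * Q * B3 * X2 \<le> 8 * H^3 * Q * B3 * X2"
        by (intro mult_right_mono) simp_all
      moreover have "2 * H * I \<le> 4 * H * I"
        by (intro mult_right_mono) simp_all
      ultimately show ?thesis by (intro add_mono order_refl)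
    qed
    finally show ?thesis .
  qed
qed


lemma coeffs:
  fixes r :: real
  assumes r: "0 < r"
  defines "h \<equiv> 2 powr r"
  shows "ennreal (2 powr (r+1)) = 2 * ennreal h"
    "ennreal (2 powr (r + 1) / (2 powr (r + 1) - 1)) = 2 * ennreal h * ennreal (1/(2*h-1))"
    "ennreal (2 powr (3 * r + 3) / (2 powr (r + 1) - 1)) = 8 * ennreal h ^ 3 * ennreal (1/(2*h-1))"
    "ennreal (2 powr (r + 2)) = 4 * ennreal h"
    "ennreal (3 * 2 powr (2 * r + 1) / (2 powr (r + 1) - 1)) = 6 * ennreal h ^ 2 * ennreal (1/(2*h-1))"
proof -
  have h1: "1 \<le> h" unfolding h_def using r by (simp add: ge_one_powr_ge_zero)
  have p1: "2 powr (r+1) = 2 * h" unfolding h_def by (simp add: powr_add)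
  have p2: "2 powr (r+2) = 4 * h" unfolding h_def by (simp add: powr_add)
  have p3: "2 powr (3 * r + 3) = 8 * h^3"
  proof -
    have "2 powr (3 * r + 3) = 2 powr (r + (r + (r + 3)))" by (rule arg_cong[where f="\<lambda>x. 2 powr x"]) simp
    also have "\<dots> = 2 powr r * (2 powr r * (2 powr r * 2 powr 3))" by (simp only: powr_add)
    finally have "2 powr (3 * r + 3) = 2 powr r * 2 powr r * 2 powr r * 2 powr 3" by (simp only: mult.assoc)
    then show ?thesis unfolding h_def by (simp add: power3_eq_cube)
  qed
  have p4: "2 powr (2 * r + 1) = 2 * h^2"
  proof -
    have "2 powr (2 * r + 1) = 2 powr (r + (r + 1))" by (rule arg_cong[where f="\<lambda>x. 2 powr x"]) simp
    also have "\<dots> = 2 powr r * (2 powr r * 2 powr 1)" by (simp only: powr_add)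
    finally have "2 powr (2 * r + 1) = 2 powr r * 2 powr r * 2 powr 1" by (simp only: mult.assoc)
    then show ?thesis unfolding h_def by (simp add: power2_eq_square)
  qed
  have q: "0 \<le> 1/(2*h-1)" using h1 by simp
  have h0: "0 \<le> h" using h1 by simp
  show "ennreal (2 powr (r+1)) = 2 * ennreal h" unfolding p1 using h0 by (simp add: ennreal_mult)
  show "ennreal (2 powr (r+2)) = 4 * ennreal h" unfolding p2 using h0 by (simp add: ennreal_mult)
  have "2 powr (r + 1) / (2 powr (r + 1) - 1) = 2 * h * (1/(2*h-1))" unfolding p1 by simp
  then show "ennreal (2 powr (r + 1) / (2 powr (r + 1) - 1)) = 2 * ennreal h * ennreal (1/(2*h-1))"
    using h0 q by (simp only: ennreal_mult mult_nonneg_nonneg zero_le_numeral ennreal_numeral)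
  have "2 powr (3 * r + 3) / (2 powr (r + 1) - 1) = 8 * h^3 * (1/(2*h-1))" unfolding p1 p3 by simp
  then show "ennreal (2 powr (3 * r + 3) / (2 powr (r + 1) - 1)) = 8 * ennreal h ^ 3 * ennreal (1/(2*h-1))"
    using h0 q by (simp only: ennreal_mult mult_nonneg_nonneg zero_le_numeral ennreal_numeral zero_le_power ennreal_power)
  have "3 * 2 powr (2 * r + 1) / (2 powr (r + 1) - 1) = 6 * h^2 * (1/(2*h-1))" unfolding p1 p4 by simp
  then show "ennreal (3 * 2 powr (2 * r + 1) / (2 powr (r + 1) - 1)) = 6 * ennreal h ^ 2 * ennreal (1/(2*h-1))"
    using h0 q by (simp only: ennreal_mult mult_nonneg_nonneg zero_le_numeral ennreal_numeral zero_le_power ennreal_power)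
qed

theorem theorem3p7:
  fixes m p :: real and u v :: "real \<Rightarrow> real" and t :: "int \<Rightarrow> ereal"
    and finK :: bool and K1 K2 :: "int set" and k :: int and \<tau> :: ereal
  assumes "0 < m" and "0 < p"
    and "weight u" and "weight v"
    and "admissible m p u v"
    and "discretizing m p u v t finK K1 K2"
    and "k \<in> Kset finK"
    and "t (k - 1) \<le> \<tau>" and "\<tau> \<le> t k"
  shows "wint v 0 (t k)
           \<le> ennreal (2 powr (p / m + 1) / (2 powr (p / m + 1) - 1)) * wint v (t (k - 1)) (t k)
     \<and> epowr (fund m p u v \<tau>) p
           \<le> ennreal (2 powr (3 * p / m + 3) / (2 powr (p / m + 1) - 1))
                * wint v (t (k - 3)) (t (k - 2)) * epowr (wint u (t (k - 2)) (t (k - 1))) (p / m)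
             + ennreal (2 powr (p / m + 2))
                * (\<integral>\<^sup>+ s \<in> {s. 0 < s \<and> t (k - 2) \<le> ereal s \<and> ereal s \<le> t (k - 1)}.
                     ennreal (v s) * epowr (wint u (ereal s) (t (k - 1))) (p / m) \<partial>lborel)
             + ennreal (3 * 2 powr (2 * p / m + 1) / (2 powr (p / m + 1) - 1))
                * wint v (t (k - 2)) (t (k - 1)) * epowr (wint u (t (k - 1)) \<tau>) (p / m)"
proof -
  note m = assms(1) and p = assms(2) and u = assms(3) and v = assms(4) and adm = assms(5)
    and D = assms(6) and k = assms(7) and tau = assms(8,9)
  have r: "0 < p/m" using m p by simp
  define h where "h = 2 powr (p/m)"
  define H where "H = ennreal h"
  define Q where "Q = ennreal (1/(2*h-1))"
  note cf = coeffs[OF r, folded h_def, folded H_def Q_def]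
  have k1: "k - 1 \<in> Kset finK" and k2: "k - 2 \<in> Kset finK" using k Kset_down by fastforce+
  have k21: "k - 2 - 1 = k - 3" and k11: "k - 1 - 1 = k - 2" by simp_all
  have c1k: "wint v 0 (t k) \<le> ennreal (2 powr (p / m + 1) / (2 powr (p / m + 1) - 1)) * wint v (t (k - 1)) (t k)"
    by (rule claim1[OF u v adm m p D k])
  have c1k1: "wint v 0 (t (k-1)) \<le> 2 * H * Q * wint v (t (k - 2)) (t (k-1))"
    using claim1[OF u v adm m p D k1] cf(2) k11 by simp
  have c1k2: "wint v 0 (t (k-2)) \<le> 2 * H * Q * wint v (t (k - 3)) (t (k-2))"
    using claim1[OF u v adm m p D k2] cf(2) k21 by simp
  obtain x1 where x1: "0 < x1" "t (k-1) = ereal x1" using disc_facts(1)[OF D k p] by blast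
  obtain x2 where x2: "0 < x2" "t (k-2) = ereal x2" using disc_facts(1)[OF D k1 p] k11 by auto
  have le21: "t (k-2) \<le> t (k-1)" using disc_facts(2)[OF D k1 p] k11 by simp
  have le1k: "t (k-1) \<le> t k" using disc_facts(2)[OF D k p] .
  have e2: "2 * H * fund_p m p u v (t (k-2)) \<le> fund_p m p u v (t (k-1))"
    using disc_facts(4)[OF D k1 p] k11 cf(1) by simp
  have fin: "fund_p m p u v (t (k-1)) < top" using fund_fin_pos(2)[OF adm p x1(1)] x1(2) by simp
  define I where "I = (\<integral>\<^sup>+ s \<in> {s. 0 < s \<and> t (k - 2) \<le> ereal s \<and> ereal s \<le> t (k - 1)}.
                     ennreal (v s) * epowr (wint u (ereal s) (t (k - 1))) (p / m) \<partial>lborel)"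
  have e1: "fund_p m p u v (t (k-1)) \<le> H * fund_p m p u v (t (k-2))
      + H * epowr (wint u (t (k-2)) (t (k-1))) (p/m) * wint v 0 (t (k-2)) + I"
    using fund_split[OF u v r, of "t (k-2)" "t (k-1)"] x2 le21
    unfolding I_def SS_def H_def h_def by simp
  have KK: "k \<in> K1 \<or> k \<in> K2" using D k unfolding discretizing_def by blast
  have fe: "epowr (fund m p u v x) p = fund_p m p u v x" for x
    unfolding fund_def using epowr_inv[OF p] .
  have K: "fund_p m p u v \<tau> \<le> 2 * H * fund_p m p u v (t (k-1)) \<or>
     fund_p m p u v \<tau> \<le> H * fund_p m p u v (t (k-1)) + H * epowr (wint u (t (k - 1)) \<tau>) (p / m) * wint v 0 (t (k-1))
        + epowr (wint u (t (k - 1)) \<tau>) (p / m) * (2 * H * wint v 0 (t (k-1)))"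
    using KK
  proof
    assume "k \<in> K2"
    then have "fund_p m p u v (t k) = 2 * H * fund_p m p u v (t (k-1))"
      using D cf(1) fe unfolding discretizing_def by auto
    moreover have "fund_p m p u v \<tau> \<le> fund_p m p u v (t k)" by (rule fund_mono[OF r tau(2)])
    ultimately show ?thesis by simp
  next
    assume "k \<in> K1"
    then have VK: "wint v 0 (t k) = 2 * H * wint v 0 (t (k-1))"
      using D cf(1) unfolding discretizing_def by auto
    have "fund_p m p u v \<tau> \<le> H * fund_p m p u v (t (k-1))
      + H * epowr (wint u (t (k-1)) \<tau>) (p/m) * wint v 0 (t (k-1))
      + (\<integral>\<^sup>+ s. ennreal (v s) * epowr (wint u (ereal s) \<tau>) (p/m) * indicator (SS (t (k-1)) \<tau>) s \<partial>lborel)"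
      using fund_split[OF u v r, of "t (k-1)" \<tau>] x1 tau unfolding H_def h_def by simp
    also have "(\<integral>\<^sup>+ s. ennreal (v s) * epowr (wint u (ereal s) \<tau>) (p/m) * indicator (SS (t (k-1)) \<tau>) s \<partial>lborel)
        \<le> epowr (wint u (t (k-1)) \<tau>) (p/m) * wint v (t (k-1)) \<tau>"
      by (rule I_bound[OF u v r])
    also have "wint v (t (k-1)) \<tau> \<le> wint v 0 (t k)"
      using x1 tau by (intro wint_mono) auto
    finally show ?thesis unfolding VK by (simp add: mult_left_mono add_mono)
  qed
  have main: "fund_p m p u v \<tau> \<le> 8 * H^3 * Q * wint v (t (k - 3)) (t (k - 2)) * epowr (wint u (t (k - 2)) (t (k - 1))) (p / m)
       + 4 * H * I + 6 * H^2 * Q * wint v (t (k - 2)) (t (k - 1)) * epowr (wint u (t (k - 1)) \<tau>) (p / m)"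
    by (rule final_arith[OF e1 e2 fin c1k2 c1k1 K])
  show ?thesis
    using c1k main unfolding fe I_def cf(3,4,5)[unfolded times_divide_eq_right] 
    by (simp add: mult.assoc)
qed

end
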